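(* Let $(Q,\mathcal M)$ be a modulated quiver with $\mathcal M$ v-uniform, $I$ an admissible ideal of $T(Q,\mathcal M)$, $\Psi$ a complexification isomorphism and $J=\Psi(\mathbf e(I\otimes_{\mathbb R}\mathbb C)\mathbf e)$. Then a vertex $v$ of $Q$ is gentle in $(Q,R_I)$ if and only if every fiber of $v$ in $\Gamma$ is gentle in $(\Gamma,J)$.
   Context: Quivers $Q=(Q_0,Q_1,s,t)$ are finite; an arrow $\alpha$ goes from $s(\alpha)$ to $t(\alpha)$. Paths are written from right to left: a path of length $n\ge1$ is $p=\alpha_n\cdots\alpha_1$ with $t(\alpha_k)=s(\alpha_{k+1})$; each vertex $i$ has a trivial path $e_i$. For a division ring $D$, $DQ$ denotes the path algebra of $Q$ over $D$ (free left $D$-module on the paths, scalars commuting with paths, multiplication by concatenation). Let $\mathbb H=\{\begin{bmatrix}a&b\\-\bar b&\bar a\end{bmatrix}:a,b\in\mathbb C\}\subset M_2(\mathbb C)$ be the real quaternions. A modulation $\mathcal M$ of $Q$ assigns to each vertex $i$ a division ring $\mathcal M(i)\in\{\mathbb R,\mathbb C,\mathbb H\}$ and to each arrow $\alpha$ a simple $\mathcal M(t(\alpha))$-$\mathcal M(s(\alpha))$-bimodule $\mathcal M(\alpha)$ on which $\mathbb R$ acts centrally; $(Q,\mathcal M)$ is a modulated quiver. Up to isomorphism there is exactly one such simple bimodule for each pair of these division rings other than $(\mathbb C,\mathbb C)$, and for $(\mathbb C,\mathbb C)$ there are exactly two: $\mathbb C$ with action $a\cdot z\cdot b=azb$, and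 $\overline{\mathbb C}$, which is $\mathbb C$ as a set with action $a\cdot z\cdot b=az\bar b$. For a path $p=\alpha_n\cdots\alpha_1$ put $\mathcal M(p)=\mathcal M(\alpha_n)\otimes_{\mathcal M(s(\alpha_n))}\cdots\otimes_{\mathcal M(s(\alpha_2))}\mathcal M(\alpha_1)$, and $\mathcal M(e_i)=\mathcal M(i)$. The tensor algebra is $T(Q,\mathcal M)=\prod_{i\in Q_0}\mathcal M(i)\oplus\bigoplus_{p}\mathcal M(p)$ (sum over paths of length $\ge1$). An ideal $I$ of $T(Q,\mathcal M)$ is admissible if $A^m\subseteq I\subseteq A^2$ for some $m\ge2$, where $A$ is the ideal generated by $\bigoplus_{\alpha\in Q_1}\mathcal M(\alpha)$. $\mathcal M$ is v-uniform with $D\in\{\mathbb R,\mathbb C,\mathbb H\}$ if $\mathcal M(i)=D$ for all $i\in Q_0$. Then every $\mathcal M(\alpha)$ has underlying set $D$, and for a path $p$ we write $1_{\mathcal M(p)}=1\otimes\cdots\otimes1\in\mathcal M(p)$ ($1_{\mathcal M(e_i)}$ being the identity of $\mathcal M(i)$). For an ideal $I$ of $T(Q,\mathcal M)$ put $R_I=\{\sum_k d_kp_k\in DQ:\ \sum_k d_k1_{\mathcal M(p_k)}\in I\}$, an ideal of $DQ$. The quiver $\Gamma$ of $(Q,\mathcal M)$: each $i\in Q_0$ with $\mathcal M(i)\in\{\mathbb R,\mathbb H\}$ gives one vertex $i$ of $\Gamma$; each $i$ with $\mathcal M(i)=\mathbb C$ gives two vertices $i,\bar i$. Each arrow $\alpha:i\to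 j$ of $Q$ gives arrows of $\Gamma$ as follows: if $\mathcal M(i)=\mathcal M(j)\in\{\mathbb R,\mathbb H\}$, one arrow $\alpha:i\to j$; if $\mathcal M(i)=\mathbb C$ and $\mathcal M(j)\in\{\mathbb R,\mathbb H\}$, arrows $\alpha:i\to j$, $\bar\alpha:\bar i\to j$; if $\mathcal M(i)\in\{\mathbb R,\mathbb H\}$ and $\mathcal M(j)=\mathbb C$, arrows $\alpha:i\to j$, $\bar\alpha:i\to\bar j$; if $\{\mathcal M(i),\mathcal M(j)\}=\{\mathbb R,\mathbb H\}$, two arrows $\alpha,\bar\alpha:i\to j$; if $\mathcal M(i)=\mathcal M(j)=\mathbb C$ and $\mathcal M(\alpha)=\mathbb C$, arrows $\alpha:i\to j$, $\bar\alpha:\bar i\to\bar j$; if $\mathcal M(i)=\mathcal M(j)=\mathbb C$ and $\mathcal M(\alpha)=\overline{\mathbb C}$, arrows $\alpha:\bar i\to j$, $\bar\alpha:i\to\bar j$. The map $\pi:\Gamma\to Q$ sends $i,\bar i\mapsto i$ and $\alpha,\bar\alpha\mapsto\alpha$. A vertex or arrow $x$ of $\Gamma$ is a fiber of $\pi(x)$; a path $\beta_n\cdots\beta_1$ of $\Gamma$ is a fiber of the path $\pi(\beta_n)\cdots\pi(\beta_1)$ of $Q$, and the fibers of a trivial path $e_i$ are the trivial paths $e_{i'}$ with $i'$ a fiber of $i$. Identify $\mathbb R\otimes_{\mathbb R}\mathbb C=\mathbb C$, $\mathbb H\otimes_{\mathbb R}\mathbb C\cong M_2(\mathbb C)$ via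 $h\otimes c\mapsto ch$, and $\mathbb C\otimes_{\mathbb R}\mathbb C\cong\mathbb C\times\mathbb C$ via $a\otimes b\mapsto(ab,\bar ab)$. Let $\mathbf e=(\epsilon_i)_{i\in Q_0}\in\prod_i\mathcal M(i)\otimes_{\mathbb R}\mathbb C\subseteq T(Q,\mathcal M)\otimes_{\mathbb R}\mathbb C$, where $\epsilon_i=1$ if $\mathcal M(i)\in\{\mathbb R,\mathbb C\}$ and $\epsilon_i$ corresponds to the matrix unit $\begin{bmatrix}1&0\\0&0\end{bmatrix}$ if $\mathcal M(i)=\mathbb H$. A complexification isomorphism for $(Q,\mathcal M)$ is a $\mathbb C$-algebra isomorphism $\Psi:\mathbf e(T(Q,\mathcal M)\otimes_{\mathbb R}\mathbb C)\mathbf e\to\mathbb C\Gamma$ such that for every path $p$ of $Q$ (trivial or not), $\Psi(\mathbf e(\mathcal M(p)\otimes_{\mathbb R}\mathbb C)\mathbf e)=\bigoplus_q\mathbb Cq$, the sum over all fibers $q$ of $p$ in $\Gamma$; such isomorphisms exist. Gentle vertices. Let $k$ be a division ring, $Q$ a quiver and $R$ an ideal of $kQ$. A vertex $v$ is gentle in $(Q,R)$ if: (1) at most two arrows start at $v$ and at most two arrows end at $v$; (2) for all arrows $\alpha,\beta,\gamma$ with $\beta\ne\gamma$ and $t(\beta)=t(\gamma)=s(\alpha)=v$, exactly one of $\alpha\beta,\alpha\gamma$ belongs to $R$; (3) for all arrows $\alpha,\gamma,\beta$ with $\alpha\ne\gamma$ and $s(\alpha)=s(\gamma)=t(\beta)=v$,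 exactly one of $\alpha\beta,\gamma\beta$ belongs to $R$. *)

theory Defs
  imports Complex_Main "HOL-Library.Product_Plus"
begin

record ('v, 'a) quiver =
  verts :: "'v set"
  arrs  :: "'a set"
  src   :: "'a \<Rightarrow> 'v"
  tgt   :: "'a \<Rightarrow> 'v"

definition finite_quiver :: "('v, 'a) quiver \<Rightarrow> bool" where
  "finite_quiver Q \<longleftrightarrow> finite (verts Q) \<and> finite (arrs Q) \<and>
     (\<forall>a\<in>arrs Q. src Q a \<in> verts Q \<and> tgt Q a \<in> verts Q)"

text \<open>A path is a pair (v, [a1,...,an]): start vertex v and the arrows in the order
  they are traversed, so it denotes the path an...a1 (written right to left);
  (v, []) is the trivial path e_v.\<close>
type_synonym ('v, 'a) path = "'v \<times> 'a list"

definition is_path :: "('v, 'a) quiver \<Rightarrow> ('v, 'a) path \<Rightarrow> bool" where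
  "is_path Q p \<longleftrightarrow> fst p \<in> verts Q \<and> (\<forall>a\<in>set (snd p). a \<in> arrs Q) \<and>
     (snd p \<noteq> [] \<longrightarrow> src Q (hd (snd p)) = fst p) \<and>
     (\<forall>k. Suc k < length (snd p) \<longrightarrow> tgt Q (snd p ! k) = src Q (snd p ! Suc k))"

definition path_end :: "('v, 'a) quiver \<Rightarrow> ('v, 'a) path \<Rightarrow> 'v" where
  "path_end Q p = (if snd p = [] then fst p else tgt Q (last (snd p)))"

text \<open>The path \<alpha>\<beta> (first \<beta>, then \<alpha>).\<close>
definition comp2 :: "('v, 'a) quiver \<Rightarrow> 'a \<Rightarrow> 'a \<Rightarrow> ('v, 'a) path" where
  "comp2 Q \<alpha> \<beta> = (src Q \<beta>, [\<beta>, \<alpha>])"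

text \<open>Decomposition of a path r into r = q p with p of length k.\<close>
definition dec_p :: "('v, 'a) path \<Rightarrow> nat \<Rightarrow> ('v, 'a) path" where
  "dec_p r k = (fst r, take k (snd r))"
definition dec_q :: "('v, 'a) quiver \<Rightarrow> ('v, 'a) path \<Rightarrow> nat \<Rightarrow> ('v, 'a) path" where
  "dec_q Q r k = (path_end Q (dec_p r k), drop k (snd r))"

definition pa_carrier :: "('v, 'a) quiver \<Rightarrow> 'k::zero set \<Rightarrow> (('v, 'a) path \<Rightarrow> 'k) set" where
  "pa_carrier Q K = {f. finite {p. f p \<noteq> 0} \<and> (\<forall>p. f p \<noteq> 0 \<longrightarrow> is_path Q p) \<and> (\<forall>p. f p \<in> K)}"

definition pa_mul :: "('v, 'a) quiver \<Rightarrow> ('k \<Rightarrow> 'k \<Rightarrow> 'k) \<Rightarrow> (('v, 'a) path \<Rightarrow> 'k \<Rightarrow> 'k)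
    \<Rightarrow> (('v, 'a) path \<Rightarrow> 'k::comm_monoid_add) \<Rightarrow> (('v, 'a) path \<Rightarrow> 'k) \<Rightarrow> ('v, 'a) path \<Rightarrow> 'k" where
  "pa_mul Q mult \<sigma> f g r =
     (\<Sum>k\<le>length (snd r). mult (f (dec_q Q r k)) (\<sigma> (dec_q Q r k) (g (dec_p r k))))"

definition path_elem :: "'k::zero \<Rightarrow> ('v, 'a) path \<Rightarrow> ('v, 'a) path \<Rightarrow> 'k" where
  "path_elem one p = (\<lambda>q. if q = p then one else 0)"

definition gentle :: "('v, 'a) quiver \<Rightarrow> 'k::zero \<Rightarrow> (('v, 'a) path \<Rightarrow> 'k) set \<Rightarrow> 'v \<Rightarrow> bool" where
  "gentle Q one R v \<longleftrightarrow>
     card {a\<in>arrs Q. src Q a = v} \<le> 2 \<and> card {a\<in>arrs Q. tgt Q a = v} \<le> 2 \<and>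
     (\<forall>\<alpha>\<in>arrs Q. \<forall>\<beta>\<in>arrs Q. \<forall>\<gamma>\<in>arrs Q.
        \<beta> \<noteq> \<gamma> \<and> tgt Q \<beta> = v \<and> tgt Q \<gamma> = v \<and> src Q \<alpha> = v \<longrightarrow>
        ((path_elem one (comp2 Q \<alpha> \<beta>) \<in> R) \<noteq> (path_elem one (comp2 Q \<alpha> \<gamma>) \<in> R))) \<and>
     (\<forall>\<alpha>\<in>arrs Q. \<forall>\<gamma>\<in>arrs Q. \<forall>\<beta>\<in>arrs Q.
        \<alpha> \<noteq> \<gamma> \<and> src Q \<alpha> = v \<and> src Q \<gamma> = v \<and> tgt Q \<beta> = v \<longrightarrow>
        ((path_elem one (comp2 Q \<alpha> \<beta>) \<in> R) \<noteq> (path_elem one (comp2 Q \<gamma> \<beta>) \<in> R)))"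

text \<open>A quaternion is encoded by (a,b) \<in> C\<times>C, standing for the matrix [[a,b],[-conj b, conj a]];
  addition is componentwise (Product_Plus), multiplication is matrix multiplication.\<close>
type_synonym quat = "complex \<times> complex"

definition qmul :: "quat \<Rightarrow> quat \<Rightarrow> quat" where
  "qmul x y = (fst x * fst y - snd x * cnj (snd y), fst x * snd y + snd x * cnj (fst y))"

definition qone :: quat where "qone = (1, 0)"

definition qscale :: "real \<Rightarrow> quat \<Rightarrow> quat" where
  "qscale r x = (of_real r * fst x, of_real r * snd x)"

text \<open>Complex conjugation on the copy of C = {(z,0)} inside H.\<close>
definition qcnj :: "quat \<Rightarrow> quat" where
  "qcnj x = (cnj (fst x), cnj (snd x))"

datatype divring = DR | DC | DH

definition Dset :: "divring \<Rightarrow> quat set" where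
  "Dset D = (case D of DR \<Rightarrow> {(of_real r, 0) | r. True} | DC \<Rightarrow> {(z, 0) | z. True} | DH \<Rightarrow> UNIV)"

text \<open>A v-uniform modulation with division ring D: M(i) = D for all i. For D \<in> {R,H} each
  M(\<alpha>) is D with the regular actions; for D = C, M(\<alpha>) is C if bar \<alpha> = False and
  conj-C if bar \<alpha> = True. Identifying M(p) with D via d \<mapsto> d\<cdot>1_{M(p)},
  T(Q,M) = finitely supported functions p \<mapsto> d_p (element \<Sum> d_p 1_{M(p)}), and
  (d 1_q)(d' 1_p) = d \<sigma>_q(d') 1_{qp}, where \<sigma>_q is complex conjugation iff D = C and q
  contains an odd number of conj-C arrows.\<close>

definition tsigma :: "divring \<Rightarrow> ('a \<Rightarrow> bool) \<Rightarrow> ('v, 'a) path \<Rightarrow> quat \<Rightarrow> quat" where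
  "tsigma D bar q x = (if D = DC \<and> odd (length (filter bar (snd q))) then qcnj x else x)"

definition T_carrier :: "('v, 'a) quiver \<Rightarrow> divring \<Rightarrow> (('v, 'a) path \<Rightarrow> quat) set" where
  "T_carrier Q D = pa_carrier Q (Dset D)"

definition T_mul :: "('v, 'a) quiver \<Rightarrow> divring \<Rightarrow> ('a \<Rightarrow> bool)
    \<Rightarrow> (('v, 'a) path \<Rightarrow> quat) \<Rightarrow> (('v, 'a) path \<Rightarrow> quat) \<Rightarrow> ('v, 'a) path \<Rightarrow> quat" where
  "T_mul Q D bar = pa_mul Q qmul (tsigma D bar)"

definition fadd :: "('p \<Rightarrow> 'k::plus) \<Rightarrow> ('p \<Rightarrow> 'k) \<Rightarrow> 'p \<Rightarrow> 'k" where
  "fadd f g = (\<lambda>p. f p + g p)"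
definition fsub :: "('p \<Rightarrow> 'k::minus) \<Rightarrow> ('p \<Rightarrow> 'k) \<Rightarrow> 'p \<Rightarrow> 'k" where
  "fsub f g = (\<lambda>p. f p - g p)"
definition fneg :: "('p \<Rightarrow> 'k::uminus) \<Rightarrow> 'p \<Rightarrow> 'k" where
  "fneg f = (\<lambda>p. - f p)"

definition T_ideal :: "('v, 'a) quiver \<Rightarrow> divring \<Rightarrow> ('a \<Rightarrow> bool) \<Rightarrow> (('v, 'a) path \<Rightarrow> quat) set \<Rightarrow> bool" where
  "T_ideal Q D bar I \<longleftrightarrow> I \<subseteq> T_carrier Q D \<and> (\<lambda>_. 0) \<in> I \<and>
     (\<forall>x\<in>I. \<forall>y\<in>I. fadd x y \<in> I) \<and> (\<forall>x\<in>I. fneg x \<in> I) \<and>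
     (\<forall>x\<in>I. \<forall>a\<in>T_carrier Q D. T_mul Q D bar a x \<in> I \<and> T_mul Q D bar x a \<in> I)"

definition T_ideal_gen :: "('v, 'a) quiver \<Rightarrow> divring \<Rightarrow> ('a \<Rightarrow> bool)
    \<Rightarrow> (('v, 'a) path \<Rightarrow> quat) set \<Rightarrow> (('v, 'a) path \<Rightarrow> quat) set" where
  "T_ideal_gen Q D bar X = \<Inter>{I. T_ideal Q D bar I \<and> X \<subseteq> I}"

definition T_arrow_part :: "('v, 'a) quiver \<Rightarrow> divring \<Rightarrow> (('v, 'a) path \<Rightarrow> quat) set" where
  "T_arrow_part Q D = {f \<in> T_carrier Q D. \<exists>\<alpha>\<in>arrs Q. \<forall>p. f p \<noteq> 0 \<longrightarrow> p = (src Q \<alpha>, [\<alpha>])}"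

definition T_A :: "('v, 'a) quiver \<Rightarrow> divring \<Rightarrow> ('a \<Rightarrow> bool) \<Rightarrow> (('v, 'a) path \<Rightarrow> quat) set" where
  "T_A Q D bar = T_ideal_gen Q D bar (T_arrow_part Q D)"

definition add_closure :: "(('p \<Rightarrow> 'k::monoid_add)) set \<Rightarrow> ('p \<Rightarrow> 'k) set" where
  "add_closure X = \<Inter>{Y. (\<lambda>_. 0) \<in> Y \<and> X \<subseteq> Y \<and> (\<forall>x\<in>Y. \<forall>y\<in>Y. fadd x y \<in> Y)}"

definition T_ideal_prod :: "('v, 'a) quiver \<Rightarrow> divring \<Rightarrow> ('a \<Rightarrow> bool)
    \<Rightarrow> (('v, 'a) path \<Rightarrow> quat) set \<Rightarrow> (('v, 'a) path \<Rightarrow> quat) set \<Rightarrow> (('v, 'a) path \<Rightarrow> quat) set" where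
  "T_ideal_prod Q D bar X Y = add_closure {T_mul Q D bar x y | x y. x \<in> X \<and> y \<in> Y}"

fun T_ideal_pow :: "('v, 'a) quiver \<Rightarrow> divring \<Rightarrow> ('a \<Rightarrow> bool)
    \<Rightarrow> (('v, 'a) path \<Rightarrow> quat) set \<Rightarrow> nat \<Rightarrow> (('v, 'a) path \<Rightarrow> quat) set" where
  "T_ideal_pow Q D bar X 0 = T_carrier Q D"
| "T_ideal_pow Q D bar X (Suc n) = T_ideal_prod Q D bar (T_ideal_pow Q D bar X n) X"

definition admissible :: "('v, 'a) quiver \<Rightarrow> divring \<Rightarrow> ('a \<Rightarrow> bool) \<Rightarrow> (('v, 'a) path \<Rightarrow> quat) set \<Rightarrow> bool" where
  "admissible Q D bar I \<longleftrightarrow> T_ideal Q D bar I \<and>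
     (\<exists>m\<ge>2. T_ideal_pow Q D bar (T_A Q D bar) m \<subseteq> I) \<and> I \<subseteq> T_ideal_pow Q D bar (T_A Q D bar) 2"

text \<open>R_I \<subseteq> DQ: \<Sum> d_k p_k \<in> R_I iff \<Sum> d_k 1_{M(p_k)} \<in> I. Since the element
  \<Sum> d_k 1_{M(p_k)} of T is represented by the same coefficient function, this is:\<close>
definition R_of :: "('v, 'a) quiver \<Rightarrow> divring \<Rightarrow> (('v, 'a) path \<Rightarrow> quat) set \<Rightarrow> (('v, 'a) path \<Rightarrow> quat) set" where
  "R_of Q D I = {f \<in> pa_carrier Q (Dset D). f \<in> I}"

text \<open>Vertex (i, False) is i, (i, True) is i-bar; arrow (\<alpha>, False) is \<alpha>, (\<alpha>, True) is \<alpha>-bar.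
  Mv gives M(i) for each vertex; bar \<alpha> says M(\<alpha>) = conj-C (only relevant for C-C arrows).\<close>
definition RH :: "divring \<Rightarrow> bool" where "RH d \<longleftrightarrow> d = DR \<or> d = DH"

definition Gamma :: "('v, 'a) quiver \<Rightarrow> ('v \<Rightarrow> divring) \<Rightarrow> ('a \<Rightarrow> bool) \<Rightarrow> ('v \<times> bool, 'a \<times> bool) quiver" where
  "Gamma Q Mv bar =
    \<lparr> verts = {(i, False) | i. i \<in> verts Q} \<union> {(i, True) | i. i \<in> verts Q \<and> Mv i = DC},
      arrs = {(\<alpha>, False) | \<alpha>. \<alpha> \<in> arrs Q} \<union>
             {(\<alpha>, True) | \<alpha>. \<alpha> \<in> arrs Q \<and> \<not> (Mv (src Q \<alpha>) = Mv (tgt Q \<alpha>) \<and> RH (Mv (src Q \<alpha>)))},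
      src = (\<lambda>(\<alpha>, b). let i = src Q \<alpha>; j = tgt Q \<alpha> in
              if Mv i = DC \<and> Mv j = DC then (i, if bar \<alpha> then \<not> b else b)
              else if Mv i = DC then (i, b) else (i, False)),
      tgt = (\<lambda>(\<alpha>, b). let i = src Q \<alpha>; j = tgt Q \<alpha> in
              if Mv j = DC then (j, b) else (j, False)) \<rparr>"

definition vertex_fibers :: "('v, 'a) quiver \<Rightarrow> ('v \<Rightarrow> divring) \<Rightarrow> ('a \<Rightarrow> bool) \<Rightarrow> 'v \<Rightarrow> ('v \<times> bool) set" where
  "vertex_fibers Q Mv bar v = {x \<in> verts (Gamma Q Mv bar). fst x = v}"

definition path_fibers :: "('v, 'a) quiver \<Rightarrow> ('v \<Rightarrow> divring) \<Rightarrow> ('a \<Rightarrow> bool) \<Rightarrow> ('v, 'a) path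
    \<Rightarrow> ('v \<times> bool, 'a \<times> bool) path set" where
  "path_fibers Q Mv bar p = {q. is_path (Gamma Q Mv bar) q \<and> fst (fst q) = fst p \<and> map fst (snd q) = snd p}"

definition CG_carrier :: "('v, 'a) quiver \<Rightarrow> ('v \<Rightarrow> divring) \<Rightarrow> ('a \<Rightarrow> bool)
    \<Rightarrow> (('v \<times> bool, 'a \<times> bool) path \<Rightarrow> complex) set" where
  "CG_carrier Q Mv bar = pa_carrier (Gamma Q Mv bar) UNIV"

definition CG_mul :: "('v, 'a) quiver \<Rightarrow> ('v \<Rightarrow> divring) \<Rightarrow> ('a \<Rightarrow> bool)
    \<Rightarrow> (('v \<times> bool, 'a \<times> bool) path \<Rightarrow> complex) \<Rightarrow> (('v \<times> bool, 'a \<times> bool) path \<Rightarrow> complex)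
    \<Rightarrow> ('v \<times> bool, 'a \<times> bool) path \<Rightarrow> complex" where
  "CG_mul Q Mv bar = pa_mul (Gamma Q Mv bar) (*) (\<lambda>_ x. x)"

text \<open>T \<otimes>_R C is modelled as pairs (x, y) of elements of T standing for x\<otimes>1 + y\<otimes>i.\<close>
type_synonym ('v, 'a) TC = "(('v, 'a) path \<Rightarrow> quat) \<times> (('v, 'a) path \<Rightarrow> quat)"

definition TC_carrier :: "('v, 'a) quiver \<Rightarrow> divring \<Rightarrow> ('v, 'a) TC set" where
  "TC_carrier Q D = T_carrier Q D \<times> T_carrier Q D"

definition TC_add :: "('v, 'a) TC \<Rightarrow> ('v, 'a) TC \<Rightarrow> ('v, 'a) TC" where
  "TC_add z w = (fadd (fst z) (fst w), fadd (snd z) (snd w))"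

definition TC_mul :: "('v, 'a) quiver \<Rightarrow> divring \<Rightarrow> ('a \<Rightarrow> bool) \<Rightarrow> ('v, 'a) TC \<Rightarrow> ('v, 'a) TC \<Rightarrow> ('v, 'a) TC" where
  "TC_mul Q D bar z w =
     (fsub (T_mul Q D bar (fst z) (fst w)) (T_mul Q D bar (snd z) (snd w)),
      fadd (T_mul Q D bar (fst z) (snd w)) (T_mul Q D bar (snd z) (fst w)))"

definition TC_scal :: "complex \<Rightarrow> ('v, 'a) TC \<Rightarrow> ('v, 'a) TC" where
  "TC_scal c z =
     ((\<lambda>p. qscale (Re c) (fst z p) - qscale (Im c) (snd z p)),
      (\<lambda>p. qscale (Re c) (snd z p) + qscale (Im c) (fst z p)))"

text \<open>The idempotent e = (eps_i)_i. For D = H, eps_i is the matrix unit E11 under h\<otimes>c \<mapsto> ch;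
  E11 = (1/2)\<otimes>1 + (-(1/2) q)\<otimes>i with q = [[i,0],[0,-i]], i.e. q = (i, 0).\<close>
definition ebold :: "('v, 'a) quiver \<Rightarrow> divring \<Rightarrow> ('v, 'a) TC" where
  "ebold Q D =
     ((\<lambda>p. if snd p = [] \<and> fst p \<in> verts Q then (if D = DH then (1/2, 0) else (1, 0)) else 0),
      (\<lambda>p. if snd p = [] \<and> fst p \<in> verts Q \<and> D = DH then (- (\<i> / 2), 0) else 0))"

definition corner :: "('v, 'a) quiver \<Rightarrow> divring \<Rightarrow> ('a \<Rightarrow> bool) \<Rightarrow> ('v, 'a) TC set \<Rightarrow> ('v, 'a) TC set" where
  "corner Q D bar X = {TC_mul Q D bar (ebold Q D) (TC_mul Q D bar z (ebold Q D)) | z. z \<in> X}"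

definition MpC :: "('v, 'a) quiver \<Rightarrow> divring \<Rightarrow> ('v, 'a) path \<Rightarrow> ('v, 'a) TC set" where
  "MpC Q D p = {z \<in> TC_carrier Q D. (\<forall>q. fst z q \<noteq> 0 \<longrightarrow> q = p) \<and> (\<forall>q. snd z q \<noteq> 0 \<longrightarrow> q = p)}"

definition complexification_iso :: "('v, 'a) quiver \<Rightarrow> divring \<Rightarrow> ('a \<Rightarrow> bool)
    \<Rightarrow> (('v, 'a) TC \<Rightarrow> ('v \<times> bool, 'a \<times> bool) path \<Rightarrow> complex) \<Rightarrow> bool" where
  "complexification_iso Q D bar \<Psi> \<longleftrightarrow>
     bij_betw \<Psi> (corner Q D bar (TC_carrier Q D)) (CG_carrier Q (\<lambda>_. D) bar) \<and>
     (\<forall>z\<in>corner Q D bar (TC_carrier Q D). \<forall>w\<in>corner Q D bar (TC_carrier Q D).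
        \<Psi> (TC_add z w) = fadd (\<Psi> z) (\<Psi> w) \<and>
        \<Psi> (TC_mul Q D bar z w) = CG_mul Q (\<lambda>_. D) bar (\<Psi> z) (\<Psi> w)) \<and>
     (\<forall>c. \<forall>z\<in>corner Q D bar (TC_carrier Q D). \<Psi> (TC_scal c z) = (\<lambda>q. c * \<Psi> z q)) \<and>
     (\<forall>p. is_path Q p \<longrightarrow>
        \<Psi> ` corner Q D bar (MpC Q D p) =
          {g \<in> CG_carrier Q (\<lambda>_. D) bar. \<forall>q. g q \<noteq> 0 \<longrightarrow> q \<in> path_fibers Q (\<lambda>_. D) bar p})"

definition IC :: "(('v, 'a) path \<Rightarrow> quat) set \<Rightarrow> ('v, 'a) TC set" where
  "IC I = I \<times> I"

end

theory Submission
  imports Defs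
begin

lemma qmul_zero_right[simp]: "qmul x 0 = 0" by (simp add: qmul_def zero_prod_def)
lemma qmul_zero_left[simp]: "qmul 0 x = 0" by (simp add: qmul_def zero_prod_def)
lemma qmul_one_right[simp]: "qmul x qone = x" by (simp add: qmul_def qone_def)
lemma tsigma_zero[simp]: "tsigma D bar q 0 = 0" by (simp add: tsigma_def qcnj_def zero_prod_def)
lemma tsigma_triv: "snd q = [] \<Longrightarrow> tsigma D bar q x = x" by (simp add: tsigma_def)
lemma path_end_triv[simp]: "path_end Q (v, []) = v" by (simp add: path_end_def)

lemma T_mul_left_triv_zero:
  assumes "\<forall>s. u s \<noteq> 0 \<longrightarrow> snd s = []" "x r = 0"
  shows "T_mul Q D bar u x r = 0"
  unfolding T_mul_def pa_mul_def
proof (rule sum.neutral, intro ballI)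
  fix k assume k: "k \<in> {..length (snd r)}"
  show "qmul (u (dec_q Q r k)) (tsigma D bar (dec_q Q r k) (x (dec_p r k))) = 0"
  proof (cases "u (dec_q Q r k) = 0")
    case True then show ?thesis by simp
  next
    case False
    then have "drop k (snd r) = []" using assms(1) unfolding dec_q_def by fastforce
    with k have "k = length (snd r)" by auto
    then have "dec_p r k = r" by (simp add: dec_p_def)
    then show ?thesis using assms(2) by simp
  qed
qed

lemma T_mul_right_triv_zero:
  assumes "\<forall>s. u s \<noteq> 0 \<longrightarrow> snd s = []" "x r = 0"
  shows "T_mul Q D bar x u r = 0"
  unfolding T_mul_def pa_mul_def
proof (rule sum.neutral, intro ballI)
  fix k assume k: "k \<in> {..length (snd r)}"
  show "qmul (x (dec_q Q r k)) (tsigma D bar (dec_q Q r k) (u (dec_p r k))) = 0"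
  proof (cases "u (dec_p r k) = 0")
    case True then show ?thesis by simp
  next
    case False
    then have "take k (snd r) = []" using assms(1) unfolding dec_p_def by fastforce
    then have "k = 0 \<or> snd r = []" by (cases "snd r") auto
    then have "dec_q Q r k = r" by (cases r) (auto simp: dec_q_def dec_p_def)
    then show ?thesis using assms(2) by simp
  qed
qed

lemma T_mul_triv_path:
  "T_mul Q D bar (path_elem d (path_end Q p, [])) (path_elem c p) = path_elem (qmul d c) p"
proof
  fix r
  have "T_mul Q D bar (path_elem d (path_end Q p, [])) (path_elem c p) r =
     (\<Sum>k\<le>length (snd r). if k = length (snd r) \<and> r = p then qmul d c else 0)"
    unfolding T_mul_def pa_mul_def
  proof (rule sum.cong[OF refl])
    fix k assume k: "k \<in> {..length (snd r)}"
    show "qmul (path_elem d (path_end Q p, []) (dec_q Q r k))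
            (tsigma D bar (dec_q Q r k) (path_elem c p (dec_p r k))) =
          (if k = length (snd r) \<and> r = p then qmul d c else 0)"
    proof (cases "k = length (snd r) \<and> r = p")
      case True
      then have "dec_p r k = p" "dec_q Q r k = (path_end Q p, [])"
        by (auto simp: dec_p_def dec_q_def)
      then show ?thesis using True by (simp add: path_elem_def tsigma_triv)
    next
      case F: False
      show ?thesis
      proof (cases "dec_p r k = p")
        case False then show ?thesis using F by (auto simp: path_elem_def)
      next
        case True
        then have e: "dec_q Q r k = (path_end Q p, drop k (snd r))" by (simp add: dec_q_def)
        have "drop k (snd r) \<noteq> []"
        proof
          assume "drop k (snd r) = []"
          with k have kk: "k = length (snd r)" by auto
          with True have "r = p" by (cases r) (simp add: dec_p_def)
          with kk F show False by simp
        qed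
        then show ?thesis using F e by (simp add: path_elem_def)
      qed
    qed
  qed
  also have "\<dots> = path_elem (qmul d c) p r"
    by (cases "r = p") (simp_all add: path_elem_def)
  finally show "T_mul Q D bar (path_elem d (path_end Q p, [])) (path_elem c p) r = path_elem (qmul d c) p r" .
qed

lemma zero_Dset[simp]: "0 \<in> Dset D"
  by (cases D) (auto simp: Dset_def zero_prod_def intro: exI[of _ 0])

lemma qone_Dset[simp]: "qone \<in> Dset D"
  by (cases D) (auto simp: Dset_def qone_def intro: exI[of _ 1])

lemma Dset_inv:
  assumes "d \<in> Dset D" "d \<noteq> 0"
  shows "\<exists>d'\<in>Dset D. qmul d' d = qone"
proof -
  obtain a b where ab: "d = (a, b)" by (cases d)
  define n where "n = (cmod a)^2 + (cmod b)^2"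
  have "n \<noteq> 0" using assms(2) ab by (auto simp: n_def zero_prod_def sum_power2_eq_zero_iff)
  hence n0: "complex_of_real n \<noteq> 0" by simp
  define d' where "d' = (cnj a / complex_of_real n, - b / complex_of_real n)"
  have "qmul d' d = qone"
  proof -
    have "cnj a * a - - b * cnj b = complex_of_real n"
      by (simp add: n_def complex_norm_square algebra_simps flip: of_real_power)
    moreover have "cnj a * b + - b * cnj a = 0" by (simp add: algebra_simps)
    ultimately show ?thesis using n0 unfolding qmul_def d'_def ab qone_def
      by (simp add: field_simps)
  qed
  moreover have "d' \<in> Dset D"
  proof (cases D)
    case DR
    then obtain r where "a = of_real r" "b = 0" using assms(1) ab by (auto simp: Dset_def)
    then show ?thesis using DR by (auto simp: Dset_def d'_def n_def intro!: exI[of _ "r / (cmod (of_real r))^2"])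
  next
    case DC
    then have "b = 0" using assms(1) ab by (auto simp: Dset_def)
    then show ?thesis using DC by (auto simp: Dset_def d'_def)
  next
    case DH then show ?thesis by (simp add: Dset_def)
  qed
  ultimately show ?thesis by blast
qed


lemma fsub_eq: "fsub f g = fadd f (fneg (g :: 'p \<Rightarrow> quat))"
  by (rule ext) (simp add: fsub_def fadd_def fneg_def)

lemma T_ideal_sub:
  assumes "T_ideal Q D bar I" "x \<in> I" "y \<in> I" shows "fsub x y \<in> I"
  using assms unfolding T_ideal_def fsub_eq by blast

lemma TC_mul_left_IC:
  assumes "T_ideal Q D bar I" "a \<in> TC_carrier Q D" "z \<in> IC I"
  shows "TC_mul Q D bar a z \<in> IC I"
proof -
  have m: "T_mul Q D bar u x \<in> I" if "u \<in> T_carrier Q D" "x \<in> I" for u x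
    using assms(1) that unfolding T_ideal_def by blast
  show ?thesis using assms unfolding TC_mul_def IC_def TC_carrier_def
    by (auto intro!: T_ideal_sub[OF assms(1)] m assms(1)[unfolded T_ideal_def, THEN conjunct2, THEN conjunct2, THEN conjunct1, rule_format])
qed

lemma TC_mul_right_IC:
  assumes "T_ideal Q D bar I" "a \<in> TC_carrier Q D" "z \<in> IC I"
  shows "TC_mul Q D bar z a \<in> IC I"
proof -
  have m: "T_mul Q D bar x u \<in> I" if "u \<in> T_carrier Q D" "x \<in> I" for u x
    using assms(1) that unfolding T_ideal_def by blast
  show ?thesis using assms unfolding TC_mul_def IC_def TC_carrier_def
    by (auto intro!: T_ideal_sub[OF assms(1)] m assms(1)[unfolded T_ideal_def, THEN conjunct2, THEN conjunct2, THEN conjunct1, rule_format])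
qed

lemma is_path_triv: "v \<in> verts Q \<Longrightarrow> is_path Q (v, [])"
  by (simp add: is_path_def)

lemma ebold_carrier:
  assumes "finite_quiver Q" shows "ebold Q D \<in> TC_carrier Q D"
proof -
  have fin: "finite {p. snd p = [] \<and> fst p \<in> verts Q}"
  proof -
    have "{p. snd p = [] \<and> fst p \<in> verts Q} = (\<lambda>v. (v, [])) ` verts Q"
      by force
    then show ?thesis using assms unfolding finite_quiver_def by (metis finite_imageI)
  qed
  have D1: "(1, 0) \<in> Dset D" using qone_Dset[of D] by (simp add: qone_def)
  show ?thesis unfolding TC_carrier_def T_carrier_def pa_carrier_def ebold_def
    using D1 by (auto simp: is_path_def intro: finite_subset[OF _ fin]) (auto simp: Dset_def)
qed

lemma path_end_verts:
  assumes "finite_quiver Q" "is_path Q p" shows "path_end Q p \<in> verts Q"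
  using assms unfolding finite_quiver_def is_path_def path_end_def
  by (cases "snd p = []") (auto dest: last_in_set)

lemma path_elem_carrier:
  assumes "is_path Q p" "d \<in> Dset D" shows "path_elem d p \<in> T_carrier Q D"
  using assms unfolding T_carrier_def pa_carrier_def path_elem_def by auto

lemma supp_single:
  assumes "\<forall>r. r \<noteq> p \<longrightarrow> f r = 0" shows "f = path_elem (f p) p"
  using assms by (auto simp: path_elem_def)

lemma R_of_eq: "T_ideal Q D bar I \<Longrightarrow> R_of Q D I = I"
  unfolding R_of_def T_ideal_def T_carrier_def by blast

lemma corner_mono: "X \<subseteq> Y \<Longrightarrow> corner Q D bar X \<subseteq> corner Q D bar Y"
  unfolding corner_def by blast

lemma ebold_triv: "\<forall>s. fst (ebold Q D) s \<noteq> 0 \<longrightarrow> snd s = []" "\<forall>s. snd (ebold Q D) s \<noteq> 0 \<longrightarrow> snd s = []"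
  by (auto simp: ebold_def)

lemma corner_supp:
  assumes "z' \<in> MpC Q D p" "r \<noteq> p"
  shows "fst (TC_mul Q D bar (ebold Q D) (TC_mul Q D bar z' (ebold Q D))) r = 0 \<and>
         snd (TC_mul Q D bar (ebold Q D) (TC_mul Q D bar z' (ebold Q D))) r = 0"
proof -
  have z: "fst z' r = 0" "snd z' r = 0" using assms unfolding MpC_def by blast+
  let ?w = "TC_mul Q D bar z' (ebold Q D)"
  have w: "fst ?w r = 0" "snd ?w r = 0"
    unfolding TC_mul_def using z
    by (simp_all add: fsub_def fadd_def T_mul_right_triv_zero[OF ebold_triv(1)] T_mul_right_triv_zero[OF ebold_triv(2)])
  show ?thesis
    unfolding TC_mul_def[of Q D bar "ebold Q D" ?w] using w
    by (simp add: fsub_def fadd_def T_mul_left_triv_zero[OF ebold_triv(1)] T_mul_left_triv_zero[OF ebold_triv(2)])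
qed

lemma key:
  assumes fq: "finite_quiver Q" and TI: "T_ideal Q D bar I" and cx: "complexification_iso Q D bar \<Psi>"
    and p: "is_path Q p" and q: "q \<in> path_fibers Q (\<lambda>_. D) bar p"
  shows "path_elem (1::complex) q \<in> \<Psi> ` corner Q D bar (IC I) \<longleftrightarrow> path_elem qone p \<in> I"
proof -
  have ImT: "I \<subseteq> T_carrier Q D" using TI by (simp add: T_ideal_def)
  have mulI: "T_mul Q D bar u x \<in> I" if "u \<in> T_carrier Q D" "x \<in> I" for u x
    using TI that unfolding T_ideal_def by blast
  have endv: "path_end Q p \<in> verts Q" using path_end_verts[OF fq p] .
  note cxu = cx[unfolded complexification_iso_def]
  have img: "\<Psi> ` corner Q D bar (MpC Q D p) =
      {g \<in> CG_carrier Q (\<lambda>_. D) bar. \<forall>q. g q \<noteq> 0 \<longrightarrow> q \<in> path_fibers Q (\<lambda>_. D) bar p}"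
    using cxu[THEN conjunct2, THEN conjunct2, THEN conjunct2, rule_format, OF p] .
  have peq: "path_elem (1::complex) q \<in> \<Psi> ` corner Q D bar (MpC Q D p)"
  proof -
    have qp: "is_path (Gamma Q (\<lambda>_. D) bar) q" using q unfolding path_fibers_def by blast
    have s1: "{r. path_elem (1::complex) q r \<noteq> 0} = {q}" by (auto simp: path_elem_def)
    have "path_elem (1::complex) q \<in> CG_carrier Q (\<lambda>_. D) bar"
      unfolding CG_carrier_def pa_carrier_def s1 using qp by (simp add: path_elem_def)
    moreover have "\<forall>r. path_elem (1::complex) q r \<noteq> 0 \<longrightarrow> r \<in> path_fibers Q (\<lambda>_. D) bar p"
      using q by (simp add: path_elem_def)
    ultimately show ?thesis unfolding img by blast
  qed
  show ?thesis
  proof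
    assume h: "path_elem (1::complex) q \<in> \<Psi> ` corner Q D bar (IC I)"
    obtain z0 where z0': "path_elem 1 q = \<Psi> z0" "z0 \<in> corner Q D bar (IC I)" using h by (rule imageE)
    have z0: "z0 \<in> corner Q D bar (IC I)" "\<Psi> z0 = path_elem 1 q" using z0' by simp_all
    obtain z1 where z1': "path_elem 1 q = \<Psi> z1" "z1 \<in> corner Q D bar (MpC Q D p)" using peq by (rule imageE)
    have z1: "z1 \<in> corner Q D bar (MpC Q D p)" "\<Psi> z1 = path_elem 1 q" using z1' by simp_all
    have ICsub: "IC I \<subseteq> TC_carrier Q D" using ImT by (auto simp: IC_def TC_carrier_def)
    have Msub: "MpC Q D p \<subseteq> TC_carrier Q D" by (auto simp: MpC_def)
    have inj: "inj_on \<Psi> (corner Q D bar (TC_carrier Q D))"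
      using cxu[THEN conjunct1] by (rule bij_betw_imp_inj_on)
    have z0c: "z0 \<in> corner Q D bar (TC_carrier Q D)" using z0(1) corner_mono[OF ICsub] by blast
    have "z1 \<in> corner Q D bar (TC_carrier Q D)" using z1(1) corner_mono[OF Msub] by blast
    with z0c z0(2) z1(2) inj have "z0 = z1" by (metis inj_on_def)
    obtain z' where z': "z' \<in> MpC Q D p" "z1 = TC_mul Q D bar (ebold Q D) (TC_mul Q D bar z' (ebold Q D))"
      using z1(1) unfolding corner_def by blast
    have supp: "\<forall>r. r \<noteq> p \<longrightarrow> fst z0 r = 0 \<and> snd z0 r = 0"
      using corner_supp[OF z'(1)] unfolding \<open>z0 = z1\<close> z'(2) by blast
    have e: "ebold Q D \<in> TC_carrier Q D" using ebold_carrier[OF fq] .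
    obtain zz where zz: "zz \<in> IC I" "z0 = TC_mul Q D bar (ebold Q D) (TC_mul Q D bar zz (ebold Q D))"
      using z0(1) unfolding corner_def by blast
    have z0I: "z0 \<in> IC I" unfolding zz(2)
      by (rule TC_mul_left_IC[OF TI e TC_mul_right_IC[OF TI e zz(1)]])
    have nz: "fst z0 p \<noteq> 0 \<or> snd z0 p \<noteq> 0"
    proof (rule ccontr)
      assume "\<not> ?thesis"
      then have z00: "fst z0 r = 0 \<and> snd z0 r = 0" for r using supp by (cases "r = p") blast+
      then have "fst z0 = (\<lambda>_. 0)" "snd z0 = (\<lambda>_. 0)" by (simp_all add: fun_eq_iff)
      then have "TC_add z0 z0 = z0" by (cases z0) (simp add: TC_add_def fadd_def)
      moreover have "\<Psi> (TC_add z0 z0) = fadd (\<Psi> z0) (\<Psi> z0)"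
        using cxu[THEN conjunct2, THEN conjunct1, rule_format, OF z0c z0c, THEN conjunct1] .
      ultimately have eq: "\<Psi> z0 = fadd (\<Psi> z0) (\<Psi> z0)" by metis
      have "path_elem (1::complex) q q = fadd (path_elem 1 q) (path_elem 1 q) q"
        using fun_cong[OF eq, of q] unfolding z0(2) .
      then show False by (simp add: path_elem_def fadd_def)
    qed
    then obtain f where f: "f \<in> I" "f p \<noteq> 0" "\<forall>r. r \<noteq> p \<longrightarrow> f r = 0"
    proof (cases "fst z0 p \<noteq> 0")
      case True then show ?thesis using that[of "fst z0"] z0I supp unfolding IC_def by (auto simp: mem_Times_iff)
    next
      case False then show ?thesis using that[of "snd z0"] nz z0I supp unfolding IC_def by (auto simp: mem_Times_iff)
    qed
    have fD: "f p \<in> Dset D" using f(1) ImT unfolding T_carrier_def pa_carrier_def by blast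
    obtain d' where d': "d' \<in> Dset D" "qmul d' (f p) = qone" using Dset_inv[OF fD f(2)] by blast
    have u: "path_elem d' (path_end Q p, []) \<in> T_carrier Q D"
      using path_elem_carrier[OF is_path_triv[OF endv] d'(1)] .
    have fe: "path_elem (f p) p = f" by (rule supp_single[OF f(3), symmetric])
    have "path_elem qone p = T_mul Q D bar (path_elem d' (path_end Q p, [])) (path_elem (f p) p)"
      using T_mul_triv_path[of Q D bar d' p "f p"] d'(2) by simp
    also have "\<dots> = T_mul Q D bar (path_elem d' (path_end Q p, [])) f" by (simp only: fe)
    finally show "path_elem qone p \<in> I" using mulI[OF u f(1)] by simp
  next
    assume h: "path_elem qone p \<in> I"
    have inI: "f \<in> I" if "f \<in> T_carrier Q D" "\<forall>r. r \<noteq> p \<longrightarrow> f r = 0" for f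
    proof -
      have fD: "f p \<in> Dset D" using that(1) unfolding T_carrier_def pa_carrier_def by blast
      have u: "path_elem (f p) (path_end Q p, []) \<in> T_carrier Q D"
        using path_elem_carrier[OF is_path_triv[OF endv] fD] .
      have fe: "path_elem (f p) p = f" by (rule supp_single[OF that(2), symmetric])
      have "T_mul Q D bar (path_elem (f p) (path_end Q p, [])) (path_elem qone p) = path_elem (f p) p"
        using T_mul_triv_path[of Q D bar "f p" p qone] by simp
      then have "T_mul Q D bar (path_elem (f p) (path_end Q p, [])) (path_elem qone p) = f"
        by (simp only: fe)
      then show ?thesis using mulI[OF u h] by simp
    qed
    have "MpC Q D p \<subseteq> IC I"
    proof
      fix z assume z: "z \<in> MpC Q D p"
      then have "fst z \<in> T_carrier Q D" "snd z \<in> T_carrier Q D"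
          "\<forall>r. r \<noteq> p \<longrightarrow> fst z r = 0" "\<forall>r. r \<noteq> p \<longrightarrow> snd z r = 0"
        unfolding MpC_def TC_carrier_def mem_Times_iff by blast+
      then show "z \<in> IC I" unfolding IC_def mem_Times_iff using inI by blast
    qed
    then show "path_elem (1::complex) q \<in> \<Psi> ` corner Q D bar (IC I)"
      using peq corner_mono by blast
  qed
qed


lemma G_verts: "x \<in> verts (Gamma Q (\<lambda>_. D) bar) \<longleftrightarrow> fst x \<in> verts Q \<and> (snd x \<longrightarrow> D = DC)"
  by (cases x) (auto simp: Gamma_def)

lemma G_arrs: "a \<in> arrs (Gamma Q (\<lambda>_. D) bar) \<longleftrightarrow> fst a \<in> arrs Q \<and> (snd a \<longrightarrow> D = DC)"
  by (cases a; cases D) (auto simp: Gamma_def RH_def)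

lemma G_src: "src (Gamma Q (\<lambda>_. D) bar) (\<alpha>, b) =
   (if D = DC then (src Q \<alpha>, if bar \<alpha> then \<not> b else b) else (src Q \<alpha>, False))"
  by (simp add: Gamma_def Let_def)

lemma G_tgt: "tgt (Gamma Q (\<lambda>_. D) bar) (\<alpha>, b) =
   (if D = DC then (tgt Q \<alpha>, b) else (tgt Q \<alpha>, False))"
  by (simp add: Gamma_def Let_def)

definition olift :: "divring \<Rightarrow> ('a \<Rightarrow> bool) \<Rightarrow> 'v \<times> bool \<Rightarrow> 'a \<Rightarrow> 'a \<times> bool" where
  "olift D bar w \<alpha> = (\<alpha>, if D = DC \<and> bar \<alpha> then \<not> snd w else snd w)"

lemma in_char:
  assumes "w \<in> verts (Gamma Q (\<lambda>_. D) bar)"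
  shows "(a \<in> arrs (Gamma Q (\<lambda>_. D) bar) \<and> tgt (Gamma Q (\<lambda>_. D) bar) a = w) \<longleftrightarrow>
         (\<exists>\<beta>. a = (\<beta>, snd w) \<and> \<beta> \<in> arrs Q \<and> tgt Q \<beta> = fst w)"
  using assms by (cases a; cases w) (auto simp: G_verts G_arrs G_tgt)

lemma out_char:
  assumes "w \<in> verts (Gamma Q (\<lambda>_. D) bar)"
  shows "(a \<in> arrs (Gamma Q (\<lambda>_. D) bar) \<and> src (Gamma Q (\<lambda>_. D) bar) a = w) \<longleftrightarrow>
         (\<exists>\<alpha>. a = olift D bar w \<alpha> \<and> \<alpha> \<in> arrs Q \<and> src Q \<alpha> = fst w)"
  using assms by (cases a; cases w) (auto simp: G_verts G_arrs G_src olift_def)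

lemma is_path_2:
  "is_path Q (src Q b, [b, a]) \<longleftrightarrow> src Q b \<in> verts Q \<and> a \<in> arrs Q \<and> b \<in> arrs Q \<and> tgt Q b = src Q a"
proof -
  have "(\<forall>k. Suc k < length [b, a] \<longrightarrow> tgt Q ([b, a] ! k) = src Q ([b, a] ! Suc k)) \<longleftrightarrow> tgt Q b = src Q a"
  proof
    assume "\<forall>k. Suc k < length [b, a] \<longrightarrow> tgt Q ([b, a] ! k) = src Q ([b, a] ! Suc k)"
    then show "tgt Q b = src Q a" by (metis One_nat_def length_Cons list.size(3) lessI nth_Cons_0 nth_Cons_Suc)
  next
    assume "tgt Q b = src Q a"
    then show "\<forall>k. Suc k < length [b, a] \<longrightarrow> tgt Q ([b, a] ! k) = src Q ([b, a] ! Suc k)"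
      by (auto simp: less_Suc_eq)
  qed
  then show ?thesis unfolding is_path_def by auto
qed

lemma fiber_comp2:
  assumes fq: "finite_quiver Q" and a: "\<alpha> \<in> arrs Q" and b: "\<beta> \<in> arrs Q"
    and w: "w \<in> verts (Gamma Q (\<lambda>_. D) bar)" and tb: "tgt Q \<beta> = fst w" and sa: "src Q \<alpha> = fst w"
  shows "is_path Q (comp2 Q \<alpha> \<beta>)"
    "comp2 (Gamma Q (\<lambda>_. D) bar) (olift D bar w \<alpha>) (\<beta>, snd w) \<in> path_fibers Q (\<lambda>_. D) bar (comp2 Q \<alpha> \<beta>)"
proof -
  show "is_path Q (comp2 Q \<alpha> \<beta>)" unfolding comp2_def is_path_2
    using fq a b tb sa unfolding finite_quiver_def by auto
  let ?G = "Gamma Q (\<lambda>_. D) bar"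
  have A: "olift D bar w \<alpha> \<in> arrs ?G \<and> src ?G (olift D bar w \<alpha>) = w"
    using out_char[OF w] a sa by blast
  have B: "(\<beta>, snd w) \<in> arrs ?G \<and> tgt ?G (\<beta>, snd w) = w"
    using in_char[OF w] b tb by blast
  have sv: "src ?G (\<beta>, snd w) \<in> verts ?G"
    using fq b unfolding finite_quiver_def by (auto simp: G_src G_verts)
  have "is_path ?G (comp2 ?G (olift D bar w \<alpha>) (\<beta>, snd w))"
    unfolding comp2_def is_path_2 using A B sv by auto
  moreover have "fst (src ?G (\<beta>, snd w)) = src Q \<beta>" by (simp add: G_src)
  ultimately show "comp2 ?G (olift D bar w \<alpha>) (\<beta>, snd w) \<in> path_fibers Q (\<lambda>_. D) bar (comp2 Q \<alpha> \<beta>)"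
    unfolding path_fibers_def by (simp add: comp2_def olift_def)
qed


lemma gentle_equiv:
  assumes fq: "finite_quiver Q" and TI: "T_ideal Q D bar I" and cx: "complexification_iso Q D bar \<Psi>"
    and w: "w \<in> verts (Gamma Q (\<lambda>_. D) bar)" and v: "fst w = v"
  shows "gentle (Gamma Q (\<lambda>_. D) bar) (1::complex) (\<Psi> ` corner Q D bar (IC I)) w \<longleftrightarrow> gentle Q qone I v"
proof -
  let ?G = "Gamma Q (\<lambda>_. D) bar"
  let ?J = "\<Psi> ` corner Q D bar (IC I)"
  let ?o = "olift D bar w"
  let ?i = "\<lambda>\<beta>. (\<beta>, snd w)"
  have K: "path_elem (1::complex) (comp2 ?G (?o \<alpha>) (?i \<beta>)) \<in> ?J \<longleftrightarrow> path_elem qone (comp2 Q \<alpha> \<beta>) \<in> I"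
    if "\<alpha> \<in> arrs Q" "\<beta> \<in> arrs Q" "tgt Q \<beta> = v" "src Q \<alpha> = v" for \<alpha> \<beta>
    using key[OF fq TI cx fiber_comp2(1,2)[OF fq that(1,2) w]] that v by simp
  have IN: "a \<in> arrs ?G \<and> tgt ?G a = w \<longleftrightarrow> (\<exists>\<beta>. a = ?i \<beta> \<and> \<beta> \<in> arrs Q \<and> tgt Q \<beta> = v)" for a
    using in_char[OF w] v by simp
  have OUT: "a \<in> arrs ?G \<and> src ?G a = w \<longleftrightarrow> (\<exists>\<alpha>. a = ?o \<alpha> \<and> \<alpha> \<in> arrs Q \<and> src Q \<alpha> = v)" for a
    using out_char[OF w] v by simp
  have oinj: "?o x = ?o y \<longleftrightarrow> x = y" for x y by (auto simp: olift_def)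
  have c1: "card {a\<in>arrs ?G. src ?G a = w} = card {a\<in>arrs Q. src Q a = v}"
  proof -
    have "{a\<in>arrs ?G. src ?G a = w} = ?o ` {a\<in>arrs Q. src Q a = v}" using OUT by blast
    moreover have "inj_on ?o {a\<in>arrs Q. src Q a = v}" using oinj by (simp add: inj_on_def)
    ultimately show ?thesis by (simp add: card_image)
  qed
  have c2: "card {a\<in>arrs ?G. tgt ?G a = w} = card {a\<in>arrs Q. tgt Q a = v}"
  proof -
    have "{a\<in>arrs ?G. tgt ?G a = w} = ?i ` {a\<in>arrs Q. tgt Q a = v}" using IN by blast
    moreover have "inj_on ?i {a\<in>arrs Q. tgt Q a = v}" by (simp add: inj_on_def)
    ultimately show ?thesis by (simp add: card_image)
  qed
  have c3: "(\<forall>\<alpha>\<in>arrs ?G. \<forall>\<beta>\<in>arrs ?G. \<forall>\<gamma>\<in>arrs ?G.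
        \<beta> \<noteq> \<gamma> \<and> tgt ?G \<beta> = w \<and> tgt ?G \<gamma> = w \<and> src ?G \<alpha> = w \<longrightarrow>
        ((path_elem 1 (comp2 ?G \<alpha> \<beta>) \<in> ?J) \<noteq> (path_elem 1 (comp2 ?G \<alpha> \<gamma>) \<in> ?J))) \<longleftrightarrow>
      (\<forall>\<alpha>\<in>arrs Q. \<forall>\<beta>\<in>arrs Q. \<forall>\<gamma>\<in>arrs Q.
        \<beta> \<noteq> \<gamma> \<and> tgt Q \<beta> = v \<and> tgt Q \<gamma> = v \<and> src Q \<alpha> = v \<longrightarrow>
        ((path_elem qone (comp2 Q \<alpha> \<beta>) \<in> I) \<noteq> (path_elem qone (comp2 Q \<alpha> \<gamma>) \<in> I)))"
    (is "?L \<longleftrightarrow> ?R")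
  proof
    assume L: ?L
    show ?R
    proof (intro ballI impI)
      fix \<alpha> \<beta> \<gamma> assume a: "\<alpha> \<in> arrs Q" "\<beta> \<in> arrs Q" "\<gamma> \<in> arrs Q"
        and h: "\<beta> \<noteq> \<gamma> \<and> tgt Q \<beta> = v \<and> tgt Q \<gamma> = v \<and> src Q \<alpha> = v"
      have A: "?o \<alpha> \<in> arrs ?G" "src ?G (?o \<alpha>) = w" using OUT[of "?o \<alpha>"] a h by blast+
      have B: "?i \<beta> \<in> arrs ?G" "tgt ?G (?i \<beta>) = w" using IN[of "?i \<beta>"] a h by blast+
      have C: "?i \<gamma> \<in> arrs ?G" "tgt ?G (?i \<gamma>) = w" using IN[of "?i \<gamma>"] a h by blast+
      have ne: "?i \<beta> \<noteq> ?i \<gamma>" using h by simp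
      have "(path_elem (1::complex) (comp2 ?G (?o \<alpha>) (?i \<beta>)) \<in> ?J) \<noteq>
                 (path_elem 1 (comp2 ?G (?o \<alpha>) (?i \<gamma>)) \<in> ?J)"
        by (rule L[rule_format]) (use A B C h ne in auto)
      then show "(path_elem qone (comp2 Q \<alpha> \<beta>) \<in> I) \<noteq> (path_elem qone (comp2 Q \<alpha> \<gamma>) \<in> I)"
        using K[of \<alpha> \<beta>] K[of \<alpha> \<gamma>] a h by simp
    qed
  next
    assume R: ?R
    show ?L
    proof (intro ballI impI)
      fix \<alpha>' \<beta>' \<gamma>' assume a: "\<alpha>' \<in> arrs ?G" "\<beta>' \<in> arrs ?G" "\<gamma>' \<in> arrs ?G"
        and h: "\<beta>' \<noteq> \<gamma>' \<and> tgt ?G \<beta>' = w \<and> tgt ?G \<gamma>' = w \<and> src ?G \<alpha>' = w"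
      obtain \<alpha> where A: "\<alpha>' = ?o \<alpha>" "\<alpha> \<in> arrs Q" "src Q \<alpha> = v" using OUT[of \<alpha>'] a h by blast
      obtain \<beta> where B: "\<beta>' = ?i \<beta>" "\<beta> \<in> arrs Q" "tgt Q \<beta> = v" using IN[of \<beta>'] a h by blast
      obtain \<gamma> where C: "\<gamma>' = ?i \<gamma>" "\<gamma> \<in> arrs Q" "tgt Q \<gamma> = v" using IN[of \<gamma>'] a h by blast
      have ne: "\<beta> \<noteq> \<gamma>" using h B C by auto
      have "(path_elem qone (comp2 Q \<alpha> \<beta>) \<in> I) \<noteq> (path_elem qone (comp2 Q \<alpha> \<gamma>) \<in> I)"
        by (rule R[rule_format]) (use A B C h ne in auto)
      then show "(path_elem (1::complex) (comp2 ?G \<alpha>' \<beta>') \<in> ?J) \<noteq> (path_elem 1 (comp2 ?G \<alpha>' \<gamma>') \<in> ?J)"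
        using K[of \<alpha> \<beta>] K[of \<alpha> \<gamma>] A B C by simp
    qed
  qed
  have c4: "(\<forall>\<alpha>\<in>arrs ?G. \<forall>\<gamma>\<in>arrs ?G. \<forall>\<beta>\<in>arrs ?G.
        \<alpha> \<noteq> \<gamma> \<and> src ?G \<alpha> = w \<and> src ?G \<gamma> = w \<and> tgt ?G \<beta> = w \<longrightarrow>
        ((path_elem 1 (comp2 ?G \<alpha> \<beta>) \<in> ?J) \<noteq> (path_elem 1 (comp2 ?G \<gamma> \<beta>) \<in> ?J))) \<longleftrightarrow>
      (\<forall>\<alpha>\<in>arrs Q. \<forall>\<gamma>\<in>arrs Q. \<forall>\<beta>\<in>arrs Q.
        \<alpha> \<noteq> \<gamma> \<and> src Q \<alpha> = v \<and> src Q \<gamma> = v \<and> tgt Q \<beta> = v \<longrightarrow>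
        ((path_elem qone (comp2 Q \<alpha> \<beta>) \<in> I) \<noteq> (path_elem qone (comp2 Q \<gamma> \<beta>) \<in> I)))"
    (is "?L \<longleftrightarrow> ?R")
  proof
    assume L: ?L
    show ?R
    proof (intro ballI impI)
      fix \<alpha> \<gamma> \<beta> assume a: "\<alpha> \<in> arrs Q" "\<gamma> \<in> arrs Q" "\<beta> \<in> arrs Q"
        and h: "\<alpha> \<noteq> \<gamma> \<and> src Q \<alpha> = v \<and> src Q \<gamma> = v \<and> tgt Q \<beta> = v"
      have A: "?o \<alpha> \<in> arrs ?G" "src ?G (?o \<alpha>) = w" using OUT[of "?o \<alpha>"] a h by blast+
      have C: "?o \<gamma> \<in> arrs ?G" "src ?G (?o \<gamma>) = w" using OUT[of "?o \<gamma>"] a h by blast+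
      have B: "?i \<beta> \<in> arrs ?G" "tgt ?G (?i \<beta>) = w" using IN[of "?i \<beta>"] a h by blast+
      have ne: "?o \<alpha> \<noteq> ?o \<gamma>" using h oinj by simp
      have "(path_elem (1::complex) (comp2 ?G (?o \<alpha>) (?i \<beta>)) \<in> ?J) \<noteq>
                 (path_elem 1 (comp2 ?G (?o \<gamma>) (?i \<beta>)) \<in> ?J)"
        by (rule L[rule_format]) (use A B C h ne in auto)
      then show "(path_elem qone (comp2 Q \<alpha> \<beta>) \<in> I) \<noteq> (path_elem qone (comp2 Q \<gamma> \<beta>) \<in> I)"
        using K[of \<alpha> \<beta>] K[of \<gamma> \<beta>] a h by simp
    qed
  next
    assume R: ?R
    show ?L
    proof (intro ballI impI)
      fix \<alpha>' \<gamma>' \<beta>' assume a: "\<alpha>' \<in> arrs ?G" "\<gamma>' \<in> arrs ?G" "\<beta>' \<in> arrs ?G"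
        and h: "\<alpha>' \<noteq> \<gamma>' \<and> src ?G \<alpha>' = w \<and> src ?G \<gamma>' = w \<and> tgt ?G \<beta>' = w"
      obtain \<alpha> where A: "\<alpha>' = ?o \<alpha>" "\<alpha> \<in> arrs Q" "src Q \<alpha> = v" using OUT[of \<alpha>'] a h by blast
      obtain \<gamma> where C: "\<gamma>' = ?o \<gamma>" "\<gamma> \<in> arrs Q" "src Q \<gamma> = v" using OUT[of \<gamma>'] a h by blast
      obtain \<beta> where B: "\<beta>' = ?i \<beta>" "\<beta> \<in> arrs Q" "tgt Q \<beta> = v" using IN[of \<beta>'] a h by blast
      have ne: "\<alpha> \<noteq> \<gamma>" using h A C by auto
      have "(path_elem qone (comp2 Q \<alpha> \<beta>) \<in> I) \<noteq> (path_elem qone (comp2 Q \<gamma> \<beta>) \<in> I)"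
        by (rule R[rule_format]) (use A B C h ne in auto)
      then show "(path_elem (1::complex) (comp2 ?G \<alpha>' \<beta>') \<in> ?J) \<noteq> (path_elem 1 (comp2 ?G \<gamma>' \<beta>') \<in> ?J)"
        using K[of \<alpha> \<beta>] K[of \<gamma> \<beta>] A B C by simp
    qed
  qed
  show ?thesis unfolding gentle_def using c1 c2 c3 c4 by simp
qed

theorem lemma5p1:
  fixes Q :: "('v, 'a) quiver" and D :: divring and bar :: "'a \<Rightarrow> bool"
    and I :: "(('v, 'a) path \<Rightarrow> quat) set"
    and \<Psi> :: "('v, 'a) TC \<Rightarrow> ('v \<times> bool, 'a \<times> bool) path \<Rightarrow> complex"
    and v :: 'v
  assumes "finite_quiver Q"
    and "admissible Q D bar I"
    and "complexification_iso Q D bar \<Psi>"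
    and "v \<in> verts Q"
  shows "gentle Q qone (R_of Q D I) v \<longleftrightarrow>
         (\<forall>w\<in>vertex_fibers Q (\<lambda>_. D) bar v.
            gentle (Gamma Q (\<lambda>_. D) bar) (1::complex) (\<Psi> ` corner Q D bar (IC I)) w)"
proof -
  have TI: "T_ideal Q D bar I" using assms(2) by (simp add: admissible_def)
  have eq: "gentle (Gamma Q (\<lambda>_. D) bar) (1::complex) (\<Psi> ` corner Q D bar (IC I)) w \<longleftrightarrow> gentle Q qone I v"
    if "w \<in> vertex_fibers Q (\<lambda>_. D) bar v" for w
    using gentle_equiv[OF assms(1) TI assms(3)] that unfolding vertex_fibers_def by blast
  have w0: "(v, False) \<in> vertex_fibers Q (\<lambda>_. D) bar v"
    using assms(4) by (simp add: vertex_fibers_def G_verts)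
  show ?thesis unfolding R_of_eq[OF TI] using eq w0 by blast
qed

end
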